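(* Let $Y_1,\dots,Y_n$ be integer-valued random variables (with arbitrary dependence) with finite means, and let $W:=\sum_{i=1}^n Y_i$. Let $(a_i)_{i=1}^n$ and $(b_i)_{i=1}^n$ be real numbers such that, for every bounded $f:\mathbb{Z}\to\mathbb{R}$ and every $1\le i\le n$, \[ \bigl|\mathbb{E}[Y_if(W)]-\mathbb{E}[Y_i]\,\mathbb{E}f(W)-a_i\,\mathbb{E}[\Delta f(W)]\bigr|\le b_i\|\Delta f\|. \] Let $\sigma^2:=\sum_{i=1}^n a_i$, assumed positive, let $\delta:=\mathbb{E}W-\sigma^2-\lfloor\mathbb{E}W-\sigma^2\rfloor$ and $\lambda':=\sigma^2+\delta$. Then \[ \|\mathcal{L}(W)-\mathrm{TP}(\mathbb{E}W,\sigma^2)\|\le 2(\lambda')^{-1}\Bigl(\delta+\sum_{i=1}^n b_i\Bigr)+2\,\mathbb{P}[W<\mathbb{E}W-\sigma^2]. \]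
   Context: $\Delta f(j):=f(j+1)-f(j)$ and, for bounded $g:\mathbb{Z}\to\mathbb{R}$, $\|g\|:=\sup_j|g(j)|$. $\mathcal{L}(W)$ denotes the law of $W$. For $\mu\in\mathbb{R}$, $\sigma^2\ge0$: $\gamma(\mu,\sigma^2):=\lfloor\mu-\sigma^2\rfloor$, $\delta(\mu,\sigma^2):=\mu-\sigma^2-\gamma(\mu,\sigma^2)$, $\lambda'(\mu,\sigma^2):=\sigma^2+\delta(\mu,\sigma^2)$, and the translated Poisson distribution $\mathrm{TP}(\mu,\sigma^2)$ on $\mathbb{Z}$ is $\mathrm{TP}(\mu,\sigma^2)\{j\}:=\mathrm{Po}(\lambda'(\mu,\sigma^2))\{j-\gamma(\mu,\sigma^2)\}$, with $\mathrm{Po}(\lambda)$ the Poisson law with mean $\lambda$. For probability measures $Q,Q'$ on $\mathbb{Z}$, $\|Q-Q'\|:=\sum_{i\in\mathbb{Z}}|Q(i)-Q'(i)|$. *)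

theory Defs
  imports "HOL-Probability.Probability"
begin

definition poisson_pt :: "real \<Rightarrow> int \<Rightarrow> real" where
  "poisson_pt lam k = (if k < 0 then 0 else lam ^ nat k / fact (nat k) * exp (- lam))"

definition tp_gamma :: "real \<Rightarrow> real \<Rightarrow> int" where
  "tp_gamma mu s2 = \<lfloor>mu - s2\<rfloor>"

definition tp_delta :: "real \<Rightarrow> real \<Rightarrow> real" where
  "tp_delta mu s2 = mu - s2 - real_of_int (tp_gamma mu s2)"

definition tp_lambda :: "real \<Rightarrow> real \<Rightarrow> real" where
  "tp_lambda mu s2 = s2 + tp_delta mu s2"

definition TP :: "real \<Rightarrow> real \<Rightarrow> int \<Rightarrow> real" where
  "TP mu s2 j = poisson_pt (tp_lambda mu s2) (j - tp_gamma mu s2)"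

definition fdiff :: "(int \<Rightarrow> real) \<Rightarrow> int \<Rightarrow> real" where
  "fdiff f j = f (j + 1) - f j"

definition supnorm :: "(int \<Rightarrow> real) \<Rightarrow> real" where
  "supnorm g = (SUP j. \<bar>g j\<bar>)"

definition bounded_fun :: "(int \<Rightarrow> real) \<Rightarrow> bool" where
  "bounded_fun f \<longleftrightarrow> (\<exists>B. \<forall>j. \<bar>f j\<bar> \<le> B)"

end

theory Submission
  imports Defs
begin



definition pp :: "real \<Rightarrow> nat \<Rightarrow> real" where
  "pp L k = L ^ k / fact k * exp (- L)"

lemma pp_pos: "L > 0 \<Longrightarrow> pp L k > 0"
  by (simp add: pp_def)

lemma pp_nonneg: "L \<ge> 0 \<Longrightarrow> pp L k \<ge> 0"
  by (simp add: pp_def)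

lemma pp_Suc: "real (Suc k) * pp L (Suc k) = L * pp L k"
proof -
  have f: "(fact (Suc k)::real) = real (Suc k) * fact k" by (rule fact_Suc)
  have nz: "(fact k::real) > 0" by simp
  have nz2: "real (Suc k) > 0" by simp
  show ?thesis unfolding pp_def f using nz nz2 by (simp add: field_simps del: of_nat_Suc)
qed

lemma pp_sums: "pp L sums 1"
proof -
  have "(\<lambda>n. L^n /\<^sub>R fact n * exp (-L)) sums (exp L * exp (-L))"
    by (rule sums_mult2[OF exp_converges])
  moreover have "exp L * exp (-L) = 1" by (simp add: exp_minus)
  moreover have "(\<lambda>n. L^n /\<^sub>R fact n * exp (-L)) = pp L"
    by (rule ext) (simp add: pp_def divide_inverse)
  ultimately show ?thesis by simp
qed

lemma pp_summable: "summable (pp L)"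
  using pp_sums sums_summable by blast

lemma pp_suminf: "suminf (pp L) = 1"
  using pp_sums sums_unique by metis

lemma alg_bound:
  fixes L k p p' a u x y t c :: real
  assumes L: "L > 0" and k: "k > 0" and p: "p > 0" and pp': "L * p' = k * p"
    and a: "a \<ge> 0" and u: "u \<ge> 0"
    and A: "k * u \<le> L * (u + p)" and B: "L * a \<le> k * (a + p)"
    and x: "0 \<le> x" "x \<le> a" and y: "0 \<le> y" "y \<le> u" and t: "0 \<le> t" "t \<le> 1"
    and c: "c = x + p * t + y" and s: "a + p + u = 1"
  shows "\<bar>(x + p * t - c * (a + p)) / (L * p) - (x - c * a) / (L * p')\<bar> \<le> 1 / L"
proof -
  define \<alpha> where "\<alpha> = u / (L * p) - (u + p) / (k * p)"
  define \<beta> where "\<beta> = a / (k * p) - (a + p) / (L * p)"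
  define \<tau> where "\<tau> = u / L + a / k"
  have uv: "u = 1 - a - p" using s by simp
  have n1: "x + p*t - c*(a+p) = (x+p*t)*u - y*(a+p)" unfolding c uv by (simp add: algebra_simps)
  have n2: "x - c*a = x*(u+p) - (y + p*t)*a" unfolding c uv by (simp add: algebra_simps)
  have lp: "L * p' = k * p" by (rule pp')
  have e1: "((x+p*t)*u - y*(a+p)) / (L*p) = x * (u / (L*p)) + t * (u / L) - y * ((a+p)/(L*p))"
    using L p by (simp add: field_simps)
  have e2: "(x*(u+p) - (y + p*t)*a) / (k*p) = x * ((u+p)/(k*p)) - y * (a/(k*p)) - t * (a / k)"
    using k p by (simp add: field_simps)
  have eq: "(x + p * t - c * (a + p)) / (L * p) - (x - c * a) / (L * p') = \<alpha> * x + \<beta> * y + \<tau> * t"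
    unfolding n1 n2 lp e1 e2 \<alpha>_def \<beta>_def \<tau>_def by (simp add: algebra_simps)
  have al: "\<alpha> \<le> 0"
  proof -
    have "u / (L * p) = (k * u) / (L * k * p)" using k by simp
    also have "\<dots> \<le> (L * (u + p)) / (L * k * p)" using A L k p by (intro divide_right_mono) auto
    also have "\<dots> = (u + p) / (k * p)" using L by simp
    finally show ?thesis unfolding \<alpha>_def by simp
  qed
  have be: "\<beta> \<le> 0"
  proof -
    have "a / (k * p) = (L * a) / (L * k * p)" using L by simp
    also have "\<dots> \<le> (k * (a + p)) / (L * k * p)" using B L k p by (intro divide_right_mono) auto
    also have "\<dots> = (a + p) / (L * p)" using k by simp
    finally show ?thesis unfolding \<beta>_def by simp
  qed
  have ta0: "\<tau> \<ge> 0" unfolding \<tau>_def using L k a u by simp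
  have ta1: "\<tau> \<le> 1 / L"
  proof -
    have "a / k = (L * a) / (L * k)" using L by simp
    also have "\<dots> \<le> (k * (a + p)) / (L * k)" using B L k by (intro divide_right_mono) auto
    also have "\<dots> = (a + p) / L" using k by simp
    finally have "a / k \<le> (a + p) / L" .
    moreover have "u / L + (a + p) / L = 1 / L" using s by (simp add: add_divide_distrib[symmetric] add_ac)
    ultimately show ?thesis unfolding \<tau>_def by linarith
  qed
  have sum: "\<alpha> * a + \<beta> * u = - \<tau>"
  proof -
    have "\<alpha> * a + \<beta> * u = - (p * a) / (k * p) - (p * u) / (L * p)"
      unfolding \<alpha>_def \<beta>_def by (simp add: algebra_simps add_divide_distrib diff_divide_distrib)
    also have "\<dots> = - \<tau>" unfolding \<tau>_def using p by simp
    finally show ?thesis .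
  qed
  have up: "\<alpha> * x + \<beta> * y + \<tau> * t \<le> 1 / L"
  proof -
    have "\<alpha> * x \<le> 0" using al x by (simp add: mult_nonpos_nonneg)
    moreover have "\<beta> * y \<le> 0" using be y by (simp add: mult_nonpos_nonneg)
    moreover have "\<tau> * t \<le> \<tau>" using ta0 t by (simp add: mult_left_le)
    ultimately show ?thesis using ta1 by linarith
  qed
  have lo: "\<alpha> * x + \<beta> * y + \<tau> * t \<ge> - (1 / L)"
  proof -
    have "\<alpha> * a \<le> \<alpha> * x" using al x by (simp add: mult_left_mono_neg)
    moreover have "\<beta> * u \<le> \<beta> * y" using be y by (simp add: mult_left_mono_neg)
    moreover have "\<tau> * t \<ge> 0" using ta0 t by simp
    ultimately show ?thesis using ta1 sum by linarith
  qed
  show ?thesis using up lo eq by linarith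
qed


definition cH :: "real \<Rightarrow> (nat \<Rightarrow> real) \<Rightarrow> real" where
  "cH L H = suminf (\<lambda>i. pp L i * H i)"
definition FF :: "real \<Rightarrow> nat \<Rightarrow> real" where
  "FF L k = sum (pp L) {..<Suc k}"
definition SS :: "real \<Rightarrow> (nat \<Rightarrow> real) \<Rightarrow> nat \<Rightarrow> real" where
  "SS L H k = (\<Sum>i<Suc k. pp L i * H i)"
definition UU :: "real \<Rightarrow> nat \<Rightarrow> real" where
  "UU L k = suminf (\<lambda>m. pp L (m + Suc k))"
definition RR :: "real \<Rightarrow> (nat \<Rightarrow> real) \<Rightarrow> nat \<Rightarrow> real" where
  "RR L H k = suminf (\<lambda>m. pp L (m + Suc k) * H (m + Suc k))"
definition GG :: "real \<Rightarrow> (nat \<Rightarrow> real) \<Rightarrow> nat \<Rightarrow> real" where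
  "GG L H k = (SS L H k - cH L H * FF L k) / (L * pp L k)"

context
  fixes L :: real and H :: "nat \<Rightarrow> real"
  assumes L: "L > 0" and H0: "\<And>i. 0 \<le> H i" and H1: "\<And>i. H i \<le> 1"
begin

lemma sumH: "summable (\<lambda>i. pp L i * H i)"
proof (rule summable_comparison_test'[OF pp_summable[of L], where N=0])
  fix n :: nat
  show "norm (pp L n * H n) \<le> pp L n"
    using pp_nonneg[of L n] L H0[of n] H1[of n] by (simp add: abs_mult mult_left_le)
qed

lemma split_c: "cH L H = RR L H k + SS L H k"
  unfolding cH_def RR_def SS_def
  using suminf_split_initial_segment[OF sumH, of "Suc k"] by simp

lemma split_1: "1 = UU L k + FF L k"
  unfolding UU_def FF_def
  using suminf_split_initial_segment[OF pp_summable[of L], of "Suc k"] pp_suminf[of L] by simp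

lemma RR_bounds: "0 \<le> RR L H k" "RR L H k \<le> UU L k"
proof -
  have s1: "summable (\<lambda>m. pp L (m + Suc k) * H (m + Suc k))"
    using summable_ignore_initial_segment[OF sumH, of "Suc k"] by simp
  have s2: "summable (\<lambda>m. pp L (m + Suc k))"
    using summable_ignore_initial_segment[OF pp_summable[of L], of "Suc k"] by simp
  show "0 \<le> RR L H k" unfolding RR_def
    using s1 by (intro suminf_nonneg) (use pp_nonneg L H0 in auto)
  show "RR L H k \<le> UU L k" unfolding RR_def UU_def
    using s1 s2 by (intro suminf_le) (use pp_nonneg L H1 in \<open>auto simp: mult_left_le\<close>)
qed

lemma UU_nonneg: "0 \<le> UU L k"
  using RR_bounds by (meson order_trans)

lemma term_bounds: "0 \<le> pp L i * H i" "pp L i * H i \<le> pp L i"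
  using pp_nonneg[of L i] L H0[of i] H1[of i] by (auto simp: mult_left_le)

lemma SS_bounds: "0 \<le> SS L H k" "SS L H k \<le> FF L k"
proof -
  show "0 \<le> SS L H k" unfolding SS_def by (rule sum_nonneg) (rule term_bounds)
  show "SS L H k \<le> FF L k" unfolding SS_def FF_def by (rule sum_mono) (rule term_bounds)
qed

lemma FF_nonneg: "0 \<le> FF L k"
  using SS_bounds by (meson order_trans)

lemma FF_le1: "FF L k \<le> 1"
  using split_1[of k] UU_nonneg[of k] by linarith

lemma c_bounds: "0 \<le> cH L H" "cH L H \<le> 1"
  using split_c[of 0] RR_bounds[of 0] SS_bounds[of 0] split_1[of 0] by linarith+

lemma FF_Suc: "FF L (Suc k) = FF L k + pp L (Suc k)"
  unfolding FF_def by simp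

lemma SS_Suc: "SS L H (Suc k) = SS L H k + pp L (Suc k) * H (Suc k)"
  unfolding SS_def by simp

lemma UU_Suc: "UU L k = pp L (Suc k) + UU L (Suc k)"
  using split_1[of k] split_1[of "Suc k"] FF_Suc[of k] by linarith

lemma keyA: "real k * UU L k \<le> L * (UU L k + pp L k)"
proof -
  have sk: "summable (\<lambda>m. pp L (m + k))"
    using summable_ignore_initial_segment[OF pp_summable[of L], of k] by simp
  have s2: "summable (\<lambda>m. pp L (m + Suc k))"
    using summable_ignore_initial_segment[OF pp_summable[of L], of "Suc k"] by simp
  have V: "UU L k + pp L k = suminf (\<lambda>m. pp L (m + k))"
    using suminf_split_head[OF sk] unfolding UU_def by simp
  have "real k * UU L k = suminf (\<lambda>m. real k * pp L (m + Suc k))"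
    unfolding UU_def using suminf_mult[OF s2, of "real k"] by simp
  also have "\<dots> \<le> suminf (\<lambda>m. L * pp L (m + k))"
  proof (rule suminf_le)
    fix m
    have "L * pp L (m + k) = real (Suc (m + k)) * pp L (Suc (m + k))"
      using pp_Suc[of "m+k" L] by simp
    moreover have "real k * pp L (Suc (m + k)) \<le> real (Suc (m + k)) * pp L (Suc (m + k))"
      using pp_nonneg[of L "Suc (m+k)"] L by (intro mult_right_mono) auto
    moreover have "m + Suc k = Suc (m + k)" by simp
    ultimately show "real k * pp L (m + Suc k) \<le> L * pp L (m + k)" by simp
  next
    show "summable (\<lambda>m. real k * pp L (m + Suc k))" using s2 by (rule summable_mult)
    show "summable (\<lambda>m. L * pp L (m + k))" using sk by (rule summable_mult)
  qed
  also have "\<dots> = L * (UU L k + pp L k)"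
    unfolding V using suminf_mult[OF sk, of L] by simp
  finally show ?thesis .
qed

lemma keyB: "L * FF L k \<le> real (Suc k) * FF L (Suc k)"
proof (induction k)
  case 0
  have "L * pp L 0 = 1 * pp L 1" using pp_Suc[of 0 L] by simp
  then show ?case unfolding FF_def using pp_nonneg[of L 0] L by simp
next
  case (Suc k)
  have "L * FF L (Suc k) = L * FF L k + L * pp L (Suc k)"
    unfolding FF_Suc by (simp add: algebra_simps)
  also have "\<dots> \<le> real (Suc k) * FF L (Suc k) + real (Suc (Suc k)) * pp L (Suc (Suc k))"
    using Suc.IH pp_Suc[of "Suc k" L] by simp
  also have "\<dots> \<le> real (Suc (Suc k)) * FF L (Suc k) + real (Suc (Suc k)) * pp L (Suc (Suc k))"
    using FF_nonneg[of "Suc k"] by (intro add_right_mono mult_right_mono) auto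
  also have "\<dots> = real (Suc (Suc k)) * FF L (Suc (Suc k))"
    using FF_Suc[of "Suc k"] by (simp add: algebra_simps)
  finally show ?case .
qed

lemma GG_diff: "\<bar>GG L H (Suc j) - GG L H j\<bar> \<le> 1 / L"
proof -
  have e: "GG L H (Suc j) - GG L H j =
     (SS L H j + pp L (Suc j) * H (Suc j) - cH L H * (FF L j + pp L (Suc j))) / (L * pp L (Suc j))
     - (SS L H j - cH L H * FF L j) / (L * pp L j)"
    unfolding GG_def SS_Suc FF_Suc by simp
  show ?thesis unfolding e
  proof (rule alg_bound[where k = "real (Suc j)" and u = "UU L (Suc j)" and y = "RR L H (Suc j)"])
    show "0 < L" by (rule L)
    show "0 < real (Suc j)" by simp
    show "0 < pp L (Suc j)" using L by (rule pp_pos)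
    show "L * pp L j = real (Suc j) * pp L (Suc j)" using pp_Suc[of j L] by simp
    show "0 \<le> FF L j" by (rule FF_nonneg)
    show "0 \<le> UU L (Suc j)" by (rule UU_nonneg)
    show "real (Suc j) * UU L (Suc j) \<le> L * (UU L (Suc j) + pp L (Suc j))" by (rule keyA)
    show "L * FF L j \<le> real (Suc j) * (FF L j + pp L (Suc j))" using keyB[of j] FF_Suc[of j] by simp
    show "0 \<le> SS L H j" "SS L H j \<le> FF L j" by (rule SS_bounds)+
    show "0 \<le> RR L H (Suc j)" "RR L H (Suc j) \<le> UU L (Suc j)" by (rule RR_bounds)+
    show "0 \<le> H (Suc j)" "H (Suc j) \<le> 1" by (rule H0, rule H1)
    show "cH L H = SS L H j + pp L (Suc j) * H (Suc j) + RR L H (Suc j)"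
      using split_c[of "Suc j"] SS_Suc[of j] by simp
    show "FF L j + pp L (Suc j) + UU L (Suc j) = 1"
      using split_1[of "Suc j"] FF_Suc[of j] by simp
  qed
qed

lemma stein0: "L * GG L H 0 = H 0 - cH L H"
proof -
  have "pp L 0 > 0" using L by (rule pp_pos)
  then show ?thesis unfolding GG_def SS_def FF_def using L by (simp add: field_simps)
qed

lemma steinSuc: "L * GG L H (Suc j) - real (Suc j) * GG L H j = H (Suc j) - cH L H"
proof -
  have p1: "pp L (Suc j) > 0" using L by (rule pp_pos)
  have p0: "pp L j > 0" using L by (rule pp_pos)
  have lp: "L * pp L j = real (Suc j) * pp L (Suc j)" using pp_Suc[of j L] by simp
  have "real (Suc j) * GG L H j = (SS L H j - cH L H * FF L j) / pp L (Suc j)"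
    unfolding GG_def lp using p1 by (simp del: of_nat_Suc)
  moreover have "L * GG L H (Suc j) = (SS L H (Suc j) - cH L H * FF L (Suc j)) / pp L (Suc j)"
    unfolding GG_def using L p1 by simp
  ultimately have "L * GG L H (Suc j) - real (Suc j) * GG L H j
     = (pp L (Suc j) * H (Suc j) - cH L H * pp L (Suc j)) / pp L (Suc j)"
    unfolding SS_Suc FF_Suc by (simp add: diff_divide_distrib[symmetric] algebra_simps)
  also have "\<dots> = H (Suc j) - cH L H" using p1 by (simp add: field_simps)
  finally show ?thesis .
qed

lemma GG0: "\<bar>GG L H 0\<bar> \<le> 1 / L"
proof -
  have "\<bar>L * GG L H 0\<bar> \<le> 1" unfolding stein0 using H0[of 0] H1[of 0] c_bounds by linarith
  then show ?thesis using L by (simp add: abs_mult field_simps)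
qed

lemma UU_mono: "UU L (Suc k) * pp L k \<le> UU L k * pp L (Suc k)"
proof -
  have "real (Suc k) * UU L (Suc k) \<le> L * UU L k"
    using keyA[of "Suc k"] UU_Suc[of k] by (simp add: add.commute)
  then have "real (Suc k) * UU L (Suc k) * pp L k \<le> L * UU L k * pp L k"
    using pp_nonneg[of L k] L by (intro mult_right_mono) auto
  also have "\<dots> = UU L k * (L * pp L k)" by (simp add: ac_simps)
  also have "\<dots> = UU L k * (real (Suc k) * pp L (Suc k))" using pp_Suc[of k L] by simp
  also have "\<dots> = real (Suc k) * (UU L k * pp L (Suc k))" by (simp add: ac_simps)
  finally have "real (Suc k) * (UU L (Suc k) * pp L k) \<le> real (Suc k) * (UU L k * pp L (Suc k))"
    by (simp add: mult.assoc)
  then show ?thesis by (rule mult_left_le_imp_le) simp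
qed

lemma UU_ratio: "UU L k * pp L 0 \<le> UU L 0 * pp L k"
proof (induction k)
  case 0 then show ?case by simp
next
  case (Suc k)
  have pk: "pp L k > 0" using L by (rule pp_pos)
  have "UU L (Suc k) * pp L 0 * pp L k = (UU L (Suc k) * pp L k) * pp L 0" by simp
  also have "\<dots> \<le> (UU L k * pp L (Suc k)) * pp L 0"
    using UU_mono[of k] pp_nonneg[of L 0] L by (intro mult_right_mono) auto
  also have "\<dots> = (UU L k * pp L 0) * pp L (Suc k)" by simp
  also have "\<dots> \<le> (UU L 0 * pp L k) * pp L (Suc k)"
    using Suc.IH pp_nonneg[of L "Suc k"] L by (intro mult_right_mono) auto
  also have "\<dots> = UU L 0 * pp L (Suc k) * pp L k" by simp
  finally show ?case using pk by simp
qed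

lemma GG_bound: "\<bar>GG L H k\<bar> \<le> 1 / (L * pp L 0)"
proof -
  have pk: "pp L k > 0" using L by (rule pp_pos)
  have p0: "pp L 0 > 0" using L by (rule pp_pos)
  have u: "UU L k = 1 - FF L k" using split_1[of k] by simp
  have num: "SS L H k - cH L H * FF L k = SS L H k * UU L k - RR L H k * FF L k"
    unfolding split_c[of k] u by (simp add: algebra_simps)
  have b1: "0 \<le> SS L H k * UU L k" "SS L H k * UU L k \<le> UU L k"
  proof -
    show "0 \<le> SS L H k * UU L k" using SS_bounds[of k] UU_nonneg[of k] by simp
    have "SS L H k * UU L k \<le> 1 * UU L k"
      using SS_bounds[of k] FF_le1[of k] UU_nonneg[of k] by (intro mult_right_mono) auto
    then show "SS L H k * UU L k \<le> UU L k" by simp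
  qed
  have b2: "0 \<le> RR L H k * FF L k" "RR L H k * FF L k \<le> UU L k"
  proof -
    show "0 \<le> RR L H k * FF L k" using RR_bounds[of k] FF_nonneg[of k] by simp
    have "RR L H k * FF L k \<le> UU L k * 1"
      using RR_bounds[of k] FF_le1[of k] FF_nonneg[of k] UU_nonneg[of k] by (intro mult_mono) auto
    then show "RR L H k * FF L k \<le> UU L k" by simp
  qed
  have U0: "UU L 0 \<le> 1" using split_1[of 0] FF_nonneg[of 0] by linarith
  have "UU L k * pp L 0 \<le> UU L 0 * pp L k" by (rule UU_ratio)
  also have "\<dots> \<le> 1 * pp L k" using U0 pk by (intro mult_right_mono) auto
  finally have Uk: "UU L k \<le> pp L k / pp L 0" using p0 by (simp add: pos_le_divide_eq)
  have N: "\<bar>SS L H k - cH L H * FF L k\<bar> \<le> pp L k / pp L 0"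
    unfolding num using b1 b2 Uk by linarith
  have "\<bar>GG L H k\<bar> = \<bar>SS L H k - cH L H * FF L k\<bar> / (L * pp L k)"
    unfolding GG_def using L pk by (simp add: abs_divide abs_mult)
  also have "\<dots> \<le> (pp L k / pp L 0) / (L * pp L k)"
    using N L pk by (intro divide_right_mono) auto
  also have "\<dots> = 1 / (L * pp L 0)" using pk L p0 by (simp add: field_simps)
  finally show ?thesis .
qed

end



definition gZ :: "real \<Rightarrow> (int \<Rightarrow> real) \<Rightarrow> int \<Rightarrow> real" where
  "gZ L h j = (if j \<le> 0 then 0 else GG L (\<lambda>k. h (int k)) (nat j - 1))"

context
  fixes L :: real and h :: "int \<Rightarrow> real"
  assumes L: "L > 0" and h0: "\<And>j. 0 \<le> h j" and h1: "\<And>j. h j \<le> 1"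
begin

lemma H0': "0 \<le> (\<lambda>k. h (int k)) i" using h0 by simp
lemma H1': "(\<lambda>k. h (int k)) i \<le> 1" using h1 by simp

lemma gZ_bound: "\<bar>gZ L h j\<bar> \<le> 1 / (L * pp L 0)"
  using GG_bound[of L "\<lambda>k. h (int k)", OF L H0' H1'] L pp_pos[OF L, of 0]
  unfolding gZ_def by (auto simp: less_imp_le)

lemma gZ_diff: "\<bar>gZ L h (j + 1) - gZ L h j\<bar> \<le> 1 / L"
proof (cases "j < 0")
  case True then show ?thesis unfolding gZ_def using L by simp
next
  case False
  show ?thesis
  proof (cases "j = 0")
    case True then show ?thesis unfolding gZ_def
      using GG0[of L "\<lambda>k. h (int k)", OF L H0' H1'] by simp
  next
    case False2: False
    with False obtain m where m: "j = int (Suc m)" by (metis int_ops(4) nat_0_le nat_less_iff not_less not_less0 not0_implies_Suc of_nat_0 zero_less_imp_eq_int)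
    have a: "nat (j + 1) - 1 = Suc m" using m by simp
    have b: "nat j - 1 = m" using m by simp
    show ?thesis unfolding gZ_def a b using m
      GG_diff[of L "\<lambda>k. h (int k)", OF L H0' H1', of m] by simp
  qed
qed

lemma gZ_stein: "j \<ge> 0 \<Longrightarrow> L * gZ L h (j + 1) - real_of_int j * gZ L h j = h j - cH L (\<lambda>k. h (int k))"
proof -
  assume j: "j \<ge> 0"
  show ?thesis
  proof (cases "j = 0")
    case True then show ?thesis unfolding gZ_def
      using stein0[of L "\<lambda>k. h (int k)", OF L H0' H1'] by simp
  next
    case False
    with j obtain m where m: "j = int (Suc m)" by (metis int_ops(4) nat_0_le nat_less_iff not_less not_less0 not0_implies_Suc of_nat_0 zero_less_imp_eq_int)
    have a: "nat (j + 1) - 1 = Suc m" using m by simp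
    have b: "nat j - 1 = m" using m by simp
    have "L * GG L (\<lambda>k. h (int k)) (Suc m) - real (Suc m) * GG L (\<lambda>k. h (int k)) m = h (int (Suc m)) - cH L (\<lambda>k. h (int k))"
      using steinSuc[of L "\<lambda>k. h (int k)", OF L H0' H1', of m] by simp
    then show ?thesis unfolding gZ_def a b using m by simp
  qed
qed

lemma gZ_neg: "j < 0 \<Longrightarrow> L * gZ L h (j + 1) - real_of_int j * gZ L h j = 0"
  unfolding gZ_def by simp

end

lemma has_sum_of_nn:
  fixes f :: "'a \<Rightarrow> real"
  assumes nn: "\<And>x. 0 \<le> f x" and s: "(\<integral>\<^sup>+x. ennreal (f x) \<partial>count_space A) = ennreal s" and s0: "0 \<le> s"
  shows "(f has_sum s) A"
proof -
  have hb: "has_bochner_integral (count_space A) f s"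
    by (rule has_bochner_integral_nn_integral) (use nn s s0 in auto)
  have i: "integrable (count_space A) f" using hb has_bochner_integral_iff by blast
  have e: "infsetsum f A = s" unfolding infsetsum_def using hb has_bochner_integral_iff by blast
  have a: "Infinite_Set_Sum.abs_summable_on f A" unfolding abs_summable_on_def by (rule i)
  have "infsum f A = s" using infsetsum_infsum[OF a] e by simp
  moreover have "f summable_on A"
    by (rule abs_summable_summable) (use a abs_summable_equivalent[of f A] in simp)
  ultimately show ?thesis using has_sum_infsum by metis
qed

lemma poisson_has_sum:
  fixes L :: real and \<psi> :: "int \<Rightarrow> real" and \<gamma> :: int
  assumes L: "L > 0" and p0: "\<And>j. 0 \<le> \<psi> j" and p1: "\<And>j. \<psi> j \<le> 1"
  shows "((\<lambda>j. poisson_pt L (j - \<gamma>) * \<psi> j) has_sum suminf (\<lambda>k. pp L k * \<psi> (int k + \<gamma>))) UNIV"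
proof -
  define G where "G k = pp L k * \<psi> (int k + \<gamma>)" for k
  have G0: "0 \<le> G k" for k unfolding G_def using pp_nonneg[of L k] L p0 by simp
  have "summable G"
  proof (rule summable_comparison_test'[OF pp_summable[of L], where N=0])
    fix n :: nat
    show "norm (G n) \<le> pp L n"
      unfolding G_def using pp_nonneg[of L n] L p0 p1 by (simp add: abs_mult mult_left_le)
  qed
  then have "G sums suminf G" by (rule summable_sums)
  then have hG: "(G has_sum suminf G) UNIV" using G0 by (rule sums_nonneg_imp_has_sum)
  define g where "g j = poisson_pt L (j - \<gamma>) * \<psi> j" for j
  define e where "e k = int k + \<gamma>" for k :: nat
  have inj: "inj_on e UNIV" unfolding e_def inj_on_def by simp
  have "g \<circ> e = G" unfolding g_def e_def G_def poisson_pt_def pp_def by (rule ext) simp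
  with hG have "((g \<circ> e) has_sum suminf G) UNIV" by simp
  then have "(g has_sum suminf G) (e ` UNIV)" by (simp only: has_sum_reindex[OF inj])
  moreover have "(g has_sum suminf G) (e ` UNIV) \<longleftrightarrow> (g has_sum suminf G) UNIV"
  proof (rule has_sum_cong_neutral)
    fix x assume x: "x \<in> UNIV - e ` UNIV"
    have "x - \<gamma> < 0"
    proof (rule ccontr)
      assume "\<not> x - \<gamma> < 0"
      then have "x = e (nat (x - \<gamma>))" unfolding e_def by simp
      then show False using x by auto
    qed
    then show "g x = 0" unfolding g_def poisson_pt_def by simp
  qed auto
  ultimately show ?thesis unfolding g_def G_def by simp
qed

lemma dist_has_sum:
  fixes M :: "'s measure" and W :: "'s \<Rightarrow> int" and A :: "int set"
  assumes P: "prob_space M" and W: "W \<in> M \<rightarrow>\<^sub>M count_space UNIV"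
  shows "((\<lambda>j. measure M {x \<in> space M. W x = j}) has_sum measure M {x \<in> space M. W x \<in> A}) A"
proof -
  interpret prob_space M by (rule P)
  define X where "X j = {x \<in> space M. W x = j}" for j
  have Xs: "X j \<in> sets M" for j
  proof -
    have "X j = W -` {j} \<inter> space M" unfolding X_def by auto
    moreover have "W -` {j} \<inter> space M \<in> sets M"
      using W unfolding measurable_count_space_eq2_countable by blast
    ultimately show ?thesis by simp
  qed
  have U: "{x \<in> space M. W x \<in> A} = \<Union> (X ` A)" unfolding X_def by blast
  have d: "disjoint_family_on X A" unfolding X_def disjoint_family_on_def by blast
  have c: "countable A" by (rule countableI_type)
  have "emeasure M (\<Union> (X ` A)) = (\<integral>\<^sup>+j. emeasure M (X j) \<partial>count_space A)"
    by (rule emeasure_UN_countable[OF Xs c d])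
  also have "\<dots> = (\<integral>\<^sup>+j. ennreal (measure M (X j)) \<partial>count_space A)"
    by (simp only: emeasure_eq_measure)
  finally have E: "(\<integral>\<^sup>+j. ennreal (measure M (X j)) \<partial>count_space A) = ennreal (measure M {x \<in> space M. W x \<in> A})"
    unfolding U by (simp only: emeasure_eq_measure)
  show ?thesis unfolding X_def[symmetric]
    by (rule has_sum_of_nn[OF _ E]) simp_all
qed



lemma meas_sum_int:
  fixes Y :: "nat \<Rightarrow> 's \<Rightarrow> int" and M :: "'s measure"
  assumes "finite S" "\<And>i. i \<in> S \<Longrightarrow> Y i \<in> M \<rightarrow>\<^sub>M count_space UNIV"
  shows "(\<lambda>x. \<Sum>k\<in>S. Y k x) \<in> M \<rightarrow>\<^sub>M count_space UNIV"
  using assms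
proof (induction S rule: finite_induct)
  case empty show ?case by simp
next
  case (insert k S)
  have Yk: "Y k \<in> M \<rightarrow>\<^sub>M count_space UNIV" using insert.prems by simp
  have IH: "(\<lambda>x. \<Sum>j\<in>S. Y j x) \<in> M \<rightarrow>\<^sub>M count_space UNIV" using insert.IH insert.prems by simp
  have "(\<lambda>x. (\<lambda>i x. i + (\<Sum>j\<in>S. Y j x)) (Y k x) x) \<in> M \<rightarrow>\<^sub>M count_space UNIV"
  proof (rule measurable_compose_countable[OF _ Yk])
    fix i :: int
    show "(\<lambda>x. i + (\<Sum>j\<in>S. Y j x)) \<in> M \<rightarrow>\<^sub>M count_space UNIV"
      using measurable_compose[OF IH measurable_count_space[where f="\<lambda>j. i + j" and A=UNIV]] by simp
  qed
  then show ?case using insert.hyps by simp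
qed

lemma int_comp:
  fixes M :: "'s measure" and W :: "'s \<Rightarrow> int" and \<psi> :: "int \<Rightarrow> real"
  assumes P: "prob_space M" and W: "W \<in> M \<rightarrow>\<^sub>M count_space UNIV" and B: "\<And>j. \<bar>\<psi> j\<bar> \<le> B"
  shows "integrable M (\<lambda>x. \<psi> (W x))"
proof -
  interpret prob_space M by (rule P)
  have m: "(\<lambda>x. \<psi> (W x)) \<in> borel_measurable M"
    using measurable_compose[OF W, of \<psi> borel] by simp
  show ?thesis
    by (rule integrable_const_bound[where B=B]) (use m B in auto)
qed

lemma int_mult:
  fixes M :: "'s measure" and W :: "'s \<Rightarrow> int" and \<psi> :: "int \<Rightarrow> real"
  assumes Z: "integrable M Z" and W: "W \<in> M \<rightarrow>\<^sub>M count_space UNIV" and B: "\<And>j. \<bar>\<psi> j\<bar> \<le> B"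
  shows "integrable M (\<lambda>x. Z x * \<psi> (W x))"
proof (rule Bochner_Integration.integrable_bound[where f="\<lambda>x. B * Z x"])
  show "integrable M (\<lambda>x. B * Z x)" using Z by simp
  have m: "(\<lambda>x. \<psi> (W x)) \<in> borel_measurable M"
    using measurable_compose[OF W, of \<psi> borel] by simp
  have mz: "Z \<in> borel_measurable M" using Z by (rule borel_measurable_integrable)
  show "(\<lambda>x. Z x * \<psi> (W x)) \<in> borel_measurable M" using m mz by measurable
  have B0: "0 \<le> B" using B[of 0] by linarith
  show "AE x in M. norm (Z x * \<psi> (W x)) \<le> norm (B * Z x)"
  proof (rule AE_I2)
    fix x
    have "\<bar>Z x\<bar> * \<bar>\<psi> (W x)\<bar> \<le> \<bar>Z x\<bar> * B" using B by (intro mult_left_mono) auto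
    then show "norm (Z x * \<psi> (W x)) \<le> norm (B * Z x)" using B0 by (simp add: abs_mult mult.commute)
  qed
qed



theorem lemma2p2:
  fixes M :: "'s measure" and n :: nat
    and Y :: "nat \<Rightarrow> 's \<Rightarrow> int" and a b :: "nat \<Rightarrow> real"
  assumes "prob_space M"
    and meas: "\<And>i. i \<in> {1..n} \<Longrightarrow> Y i \<in> M \<rightarrow>\<^sub>M count_space UNIV"
    and int: "\<And>i. i \<in> {1..n} \<Longrightarrow> integrable M (\<lambda>x. real_of_int (Y i x))"
    and stein: "\<And>f i. bounded_fun f \<Longrightarrow> i \<in> {1..n} \<Longrightarrow>
       \<bar>(\<integral>x. real_of_int (Y i x) * f (\<Sum>k=1..n. Y k x) \<partial>M)
         - (\<integral>x. real_of_int (Y i x) \<partial>M) * (\<integral>x. f (\<Sum>k=1..n. Y k x) \<partial>M)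
         - a i * (\<integral>x. fdiff f (\<Sum>k=1..n. Y k x) \<partial>M)\<bar>
       \<le> b i * supnorm (fdiff f)"
    and pos: "(\<Sum>i=1..n. a i) > 0"
  shows "(let W = (\<lambda>x. \<Sum>k=1..n. Y k x);
              EW = (\<integral>x. real_of_int (W x) \<partial>M);
              s2 = (\<Sum>i=1..n. a i);
              del = EW - s2 - real_of_int \<lfloor>EW - s2\<rfloor>;
              lam = s2 + del
          in (\<Sum>\<^sub>\<infinity>j\<in>(UNIV::int set). \<bar>measure M {x \<in> space M. W x = j} - TP EW s2 j\<bar>)
             \<le> 2 / lam * (del + (\<Sum>i=1..n. b i))
               + 2 * measure M {x \<in> space M. real_of_int (W x) < EW - s2})"
proof -
  note P = assms(1)
  interpret prob_space M by (rule P)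
  define W where "W = (\<lambda>x. \<Sum>k=1..n. Y k x)"
  define EW where "EW = (\<integral>x. real_of_int (W x) \<partial>M)"
  define s2 where "s2 = (\<Sum>i=1..n. a i)"
  define del where "del = EW - s2 - real_of_int \<lfloor>EW - s2\<rfloor>"
  define lam where "lam = s2 + del"
  define \<gamma> where "\<gamma> = \<lfloor>EW - s2\<rfloor>"
  have del0: "0 \<le> del" unfolding del_def by linarith
  have s2pos: "s2 > 0" unfolding s2_def by (rule pos)
  have lam: "lam > 0" unfolding lam_def using del0 s2pos by linarith
  have lamEW: "EW = lam + real_of_int \<gamma>" unfolding lam_def del_def \<gamma>_def by simp
  have TPeq: "TP EW s2 j = poisson_pt lam (j - \<gamma>)" for j
    unfolding TP_def tp_lambda_def tp_delta_def tp_gamma_def lam_def del_def \<gamma>_def by simp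
  have Wm: "W \<in> M \<rightarrow>\<^sub>M count_space UNIV" unfolding W_def
    by (rule meas_sum_int) (use meas in auto)
  have Wr: "real_of_int (W x) = (\<Sum>k=1..n. real_of_int (Y k x))" for x
    unfolding W_def by simp
  have EWs: "EW = (\<Sum>k=1..n. \<integral>x. real_of_int (Y k x) \<partial>M)"
    unfolding EW_def Wr by (rule Bochner_Integration.integral_sum) (rule int)
  have intW: "integrable M (\<lambda>x. real_of_int (W x))"
    unfolding Wr by (rule Bochner_Integration.integrable_sum) (rule int)

  define p where "p j = measure M {x \<in> space M. W x = j}" for j
  define q where "q j = poisson_pt lam (j - \<gamma>)" for j
  define \<phi> where "\<phi> j = (if q j \<le> p j then 1 else 0 :: real)" for j
  define h where "h m = \<phi> (m + \<gamma>)" for m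
  define H where "H = (\<lambda>k::nat. h (int k))"
  define c where "c = cH lam H"
  define Aset where "Aset = {j. q j \<le> p j}"
  define PA where "PA = measure M {x \<in> space M. W x \<in> Aset}"
  define Pg where "Pg = measure M {x \<in> space M. W x < \<gamma>}"
  have \<phi>01: "0 \<le> \<phi> j" "\<phi> j \<le> 1" for j unfolding \<phi>_def by auto
  have h01: "0 \<le> h j" "h j \<le> 1" for j unfolding h_def using \<phi>01 by auto
  have c01: "0 \<le> c" "c \<le> 1" unfolding c_def H_def
    using c_bounds[of lam "\<lambda>k. h (int k)", OF lam] h01 by auto

  define g where "g = gZ lam h"
  define B0 where "B0 = 1 / (lam * pp lam 0)"
  have gb: "\<bar>g j\<bar> \<le> B0" for j unfolding g_def B0_def
    using gZ_bound[of lam h, OF lam] h01 by auto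
  have gd: "\<bar>g (j + 1) - g j\<bar> \<le> 1 / lam" for j unfolding g_def
    using gZ_diff[of lam h, OF lam] h01 by auto
  define r where "r m = h m - c - (lam * g (m + 1) - real_of_int m * g m)" for m
  have rb: "\<bar>r m\<bar> \<le> (if m < \<gamma> - \<gamma> then 1 else 0)" for m
  proof (cases "m < 0")
    case True
    then have "r m = h m - c" unfolding r_def g_def using gZ_neg[of lam h, OF lam] h01 by auto
    then show ?thesis using True h01[of m] c01 by auto
  next
    case False
    then have "r m = 0" unfolding r_def g_def c_def H_def using gZ_stein[of lam h, OF lam] h01 by auto
    then show ?thesis by simp
  qed
  define f where "f j = g (j - \<gamma>)" for j
  have fb: "\<bar>f j\<bar> \<le> B0" for j unfolding f_def by (rule gb)
  have fdiff_eq: "fdiff f j = g (j - \<gamma> + 1) - g (j - \<gamma>)" for j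
    unfolding fdiff_def f_def by (simp add: algebra_simps)
  have fdb: "\<bar>fdiff f j\<bar> \<le> 1 / lam" for j unfolding fdiff_eq by (rule gd)
  have supb: "supnorm (fdiff f) \<le> 1 / lam"
    unfolding supnorm_def by (rule cSUP_least) (use fdb in auto)
  have bf: "bounded_fun f" unfolding bounded_fun_def using fb by blast
  have supn: "0 \<le> supnorm (fdiff f)"
  proof -
    have "\<bar>fdiff f 0\<bar> \<le> supnorm (fdiff f)" unfolding supnorm_def
      by (rule cSUP_upper) (use fdb in \<open>auto intro!: bdd_aboveI\<close>)
    then show ?thesis by linarith
  qed

  have b0: "0 \<le> b i" if i: "i \<in> {1..n}" for i
  proof -
    define f0 where "f0 j = (if j = 0 then 1 else 0 :: real)" for j :: int
    have "bounded_fun f0" unfolding bounded_fun_def f0_def by (rule exI[of _ 1]) auto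
    from stein[OF this i] have st: "0 \<le> b i * supnorm (fdiff f0)" by linarith
    have fd0: "\<bar>fdiff f0 j\<bar> \<le> 1" for j unfolding fdiff_def f0_def by auto
    have "\<bar>fdiff f0 (-1)\<bar> \<le> supnorm (fdiff f0)" unfolding supnorm_def
      by (rule cSUP_upper) (use fd0 in \<open>auto intro!: bdd_aboveI\<close>)
    moreover have "\<bar>fdiff f0 (-1)\<bar> = 1" unfolding fdiff_def f0_def by simp
    ultimately have "supnorm (fdiff f0) > 0" by linarith
    with st show ?thesis by (simp add: zero_le_mult_iff)
  qed

  define I0 where "I0 = (\<integral>x. f (W x) \<partial>M)"
  define I1 where "I1 = (\<integral>x. f (W x + 1) \<partial>M)"
  define D where "D = (\<integral>x. fdiff f (W x) \<partial>M)"
  define IW where "IW = (\<integral>x. real_of_int (W x) * f (W x) \<partial>M)"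
  define R where "R = (\<integral>x. r (W x - \<gamma>) \<partial>M)"
  have i0: "integrable M (\<lambda>x. f (W x))" by (rule int_comp[OF P Wm fb])
  have i1: "integrable M (\<lambda>x. f (W x + 1))"
    using int_comp[OF P Wm, of "\<lambda>j. f (j + 1)" B0] fb by simp
  have iD: "integrable M (\<lambda>x. fdiff f (W x))" by (rule int_comp[OF P Wm fdb])
  have iW: "integrable M (\<lambda>x. real_of_int (W x) * f (W x))" by (rule int_mult[OF intW Wm fb])
  have rb1: "\<bar>r m\<bar> \<le> 1" for m using rb[of m] by (simp split: if_splits)
  have iR: "integrable M (\<lambda>x. r (W x - \<gamma>))"
    by (rule int_comp[OF P Wm, of "\<lambda>j. r (j - \<gamma>)" 1]) (rule rb1)
  have iY: "integrable M (\<lambda>x. real_of_int (Y i x) * f (W x))" if "i \<in> {1..n}" for i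
    by (rule int_mult[OF int[OF that] Wm fb])
  have DI: "D = I1 - I0"
  proof -
    have "D = (\<integral>x. f (W x + 1) - f (W x) \<partial>M)" unfolding D_def fdiff_def by simp
    also have "\<dots> = I1 - I0" unfolding I1_def I0_def using i1 i0 by (rule Bochner_Integration.integral_diff)
    finally show ?thesis .
  qed
  have Db: "\<bar>D\<bar> \<le> 1 / lam"
  proof -
    have ic: "integrable M (\<lambda>x. 1 / lam)" by simp
    have u: "D \<le> (\<integral>x. 1 / lam \<partial>M)" unfolding D_def
      by (rule Bochner_Integration.integral_mono[OF iD ic]) (use fdb in \<open>auto simp: abs_le_iff\<close>)
    have l: "(\<integral>x. - fdiff f (W x) \<partial>M) \<le> (\<integral>x. 1 / lam \<partial>M)"
      by (rule Bochner_Integration.integral_mono) (use iD ic fdb in \<open>auto simp: abs_le_iff\<close>)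
    have "(\<integral>x. - fdiff f (W x) \<partial>M) = - D" unfolding D_def by simp
    then show ?thesis using u l by (simp add: prob_space)
  qed

  define e where "e i = (\<integral>x. real_of_int (Y i x) * f (W x) \<partial>M)
         - (\<integral>x. real_of_int (Y i x) \<partial>M) * I0 - a i * D" for i
  have eb: "\<bar>e i\<bar> \<le> b i / lam" if i: "i \<in> {1..n}" for i
  proof -
    have "\<bar>e i\<bar> \<le> b i * supnorm (fdiff f)"
      using stein[OF bf i] unfolding e_def I0_def D_def W_def .
    also have "\<dots> \<le> b i * (1 / lam)" using supb b0[OF i] by (rule mult_left_mono)
    finally show ?thesis by simp
  qed
  define E where "E = (\<Sum>i=1..n. e i)"
  have Eb: "\<bar>E\<bar> \<le> (\<Sum>i=1..n. b i) / lam"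
  proof -
    have "\<bar>E\<bar> \<le> (\<Sum>i=1..n. \<bar>e i\<bar>)" unfolding E_def by (rule sum_abs)
    also have "\<dots> \<le> (\<Sum>i=1..n. b i / lam)" by (rule sum_mono) (rule eb)
    also have "\<dots> = (\<Sum>i=1..n. b i) / lam" by (simp add: sum_divide_distrib)
    finally show ?thesis .
  qed
  have IWeq: "IW = EW * I0 + s2 * D + E"
  proof -
    have "IW = (\<integral>x. (\<Sum>i=1..n. real_of_int (Y i x) * f (W x)) \<partial>M)"
      unfolding IW_def Wr by (simp add: sum_distrib_right)
    also have "\<dots> = (\<Sum>i=1..n. \<integral>x. real_of_int (Y i x) * f (W x) \<partial>M)"
      by (rule Bochner_Integration.integral_sum) (rule iY)
    finally have a1: "IW = (\<Sum>i=1..n. \<integral>x. real_of_int (Y i x) * f (W x) \<partial>M)" .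
    have "E = (\<Sum>i=1..n. \<integral>x. real_of_int (Y i x) * f (W x) \<partial>M)
         - (\<Sum>i=1..n. \<integral>x. real_of_int (Y i x) \<partial>M) * I0 - (\<Sum>i=1..n. a i) * D"
      unfolding E_def e_def by (simp add: sum_subtractf sum_distrib_right)
    then show ?thesis using a1 EWs s2_def by simp
  qed

  have pw: "\<phi> (W x) = c + lam * f (W x + 1) - (real_of_int (W x) * f (W x) - real_of_int \<gamma> * f (W x)) + r (W x - \<gamma>)" for x
  proof -
    have "h (W x - \<gamma>) = \<phi> (W x)" unfolding h_def by simp
    moreover have "f (W x + 1) = g (W x - \<gamma> + 1)" unfolding f_def by (simp add: algebra_simps)
    moreover have "f (W x) = g (W x - \<gamma>)" unfolding f_def by simp
    ultimately show ?thesis unfolding r_def by (simp add: algebra_simps)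
  qed
  have intphi: "(\<integral>x. \<phi> (W x) \<partial>M) = c + lam * I1 - (IW - real_of_int \<gamma> * I0) + R"
  proof -
    have "(\<integral>x. \<phi> (W x) \<partial>M) = (\<integral>x. c + lam * f (W x + 1) - (real_of_int (W x) * f (W x) - real_of_int \<gamma> * f (W x)) + r (W x - \<gamma>) \<partial>M)"
      by (subst pw) simp
    also have "\<dots> = c + lam * I1 - (IW - real_of_int \<gamma> * I0) + R"
      unfolding I1_def IW_def I0_def R_def using i0 i1 iW iR by (simp add: prob_space)
    finally show ?thesis .
  qed
  have Rb: "R \<le> Pg"
  proof -
    have setm: "{x \<in> space M. W x < \<gamma>} \<in> sets M"
    proof -
      have "{x \<in> space M. W x < \<gamma>} = W -` {..<\<gamma>} \<inter> space M" by auto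
      then show ?thesis using measurable_sets[OF Wm, of "{..<\<gamma>}"] by simp
    qed
    define \<psi> where "\<psi> j = (if j < \<gamma> then 1 else 0 :: real)" for j
    have ip: "integrable M (\<lambda>x. \<psi> (W x))"
      by (rule int_comp[OF P Wm, of \<psi> 1]) (simp add: \<psi>_def)
    have "R \<le> (\<integral>x. \<psi> (W x) \<partial>M)"
      unfolding R_def
    proof (rule Bochner_Integration.integral_mono[OF iR ip])
      fix x assume "x \<in> space M"
      then show "r (W x - \<gamma>) \<le> \<psi> (W x)"
        using rb[of "W x - \<gamma>"] unfolding \<psi>_def by (auto split: if_splits)
    qed
    also have "\<dots> = (\<integral>x. indicator {x \<in> space M. W x < \<gamma>} x \<partial>M)"
      by (rule Bochner_Integration.integral_cong) (auto simp: \<psi>_def indicator_def)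
    also have "\<dots> = Pg" unfolding Pg_def using setm by (simp add: Int_absorb2 sets.sets_into_space)
    finally show ?thesis .
  qed
  have PAeq: "(\<integral>x. \<phi> (W x) \<partial>M) = PA"
  proof -
    have setm: "{x \<in> space M. W x \<in> Aset} \<in> sets M"
    proof -
      have "{x \<in> space M. W x \<in> Aset} = W -` Aset \<inter> space M" by auto
      then show ?thesis using measurable_sets[OF Wm, of Aset] by simp
    qed
    have "(\<integral>x. \<phi> (W x) \<partial>M) = (\<integral>x. indicator {x \<in> space M. W x \<in> Aset} x \<partial>M)"
      by (rule Bochner_Integration.integral_cong) (auto simp: \<phi>_def Aset_def indicator_def)
    also have "\<dots> = PA" unfolding PA_def using setm by (simp add: Int_absorb2 sets.sets_into_space)
    finally show ?thesis .
  qed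
  have main: "PA - c \<le> (del + (\<Sum>i=1..n. b i)) / lam + Pg"
  proof -
    have "PA - c = del * (I1 - I0) - E + R"
      using intphi PAeq IWeq[unfolded DI] lamEW unfolding lam_def by (simp add: algebra_simps)
    then have "PA - c = del * D - E + R" using DI by simp
    moreover have "del * D \<le> del / lam"
    proof -
      have "del * D \<le> del * (1 / lam)" using del0 Db by (intro mult_left_mono) auto
      then show ?thesis by simp
    qed
    ultimately show ?thesis using Eb Rb by (simp add: add_divide_distrib)
  qed

  have hp: "(p has_sum 1) UNIV"
    using dist_has_sum[OF P Wm, of UNIV] unfolding p_def by (simp add: prob_space)
  have hpA: "((\<lambda>j. p j * \<phi> j) has_sum PA) UNIV"
  proof -
    have "(p has_sum PA) Aset" using dist_has_sum[OF P Wm, of Aset] unfolding p_def PA_def .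
    moreover have "(p has_sum PA) Aset \<longleftrightarrow> ((\<lambda>j. p j * \<phi> j) has_sum PA) UNIV"
      by (rule has_sum_cong_neutral) (auto simp: \<phi>_def Aset_def)
    ultimately show ?thesis by simp
  qed
  have hq: "(q has_sum 1) UNIV"
    using poisson_has_sum[OF lam, of "\<lambda>_. 1" \<gamma>] pp_suminf[of lam] unfolding q_def by simp
  have hqphi: "((\<lambda>j. q j * \<phi> j) has_sum c) UNIV"
  proof -
    have "suminf (\<lambda>k. pp lam k * \<phi> (int k + \<gamma>)) = c"
      unfolding c_def cH_def H_def h_def by simp
    then show ?thesis using poisson_has_sum[OF lam, of \<phi> \<gamma>] \<phi>01 unfolding q_def by simp
  qed
  have hT: "((\<lambda>j. 2 * (p j * \<phi> j) + (-2) * (q j * \<phi> j) + ((-1) * p j + q j)) has_sum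
      (2 * PA + (-2) * c + ((-1) * 1 + 1))) UNIV"
    by (intro has_sum_add has_sum_cmult_right hpA hqphi hp hq)
  have Teq: "(\<lambda>j. \<bar>measure M {x \<in> space M. W x = j} - TP EW s2 j\<bar>) =
     (\<lambda>j. 2 * (p j * \<phi> j) + (-2) * (q j * \<phi> j) + ((-1) * p j + q j))"
    by (rule ext) (simp add: TPeq p_def[symmetric] q_def[symmetric] \<phi>_def)
  have TV: "(\<Sum>\<^sub>\<infinity>j\<in>(UNIV::int set). \<bar>measure M {x \<in> space M. W x = j} - TP EW s2 j\<bar>) = 2 * (PA - c)"
    unfolding Teq using infsumI[OF hT] by simp
  have Pgle: "Pg \<le> measure M {x \<in> space M. real_of_int (W x) < EW - s2}"
    unfolding Pg_def
  proof (rule finite_measure_mono)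
    show "{x \<in> space M. W x < \<gamma>} \<subseteq> {x \<in> space M. real_of_int (W x) < EW - s2}"
    proof safe
      fix x assume "W x < \<gamma>"
      then have "real_of_int (W x) < real_of_int \<gamma>" by simp
      also have "\<dots> \<le> EW - s2" unfolding \<gamma>_def by (rule of_int_floor_le)
      finally show "real_of_int (W x) < EW - s2" .
    qed
    have "{x \<in> space M. real_of_int (W x) < EW - s2} = W -` {j. real_of_int j < EW - s2} \<inter> space M" by auto
    then show "{x \<in> space M. real_of_int (W x) < EW - s2} \<in> sets M"
      using measurable_sets[OF Wm, of "{j. real_of_int j < EW - s2}"] by simp
  qed
  have final: "(\<Sum>\<^sub>\<infinity>j\<in>(UNIV::int set). \<bar>measure M {x \<in> space M. W x = j} - TP EW s2 j\<bar>)
     \<le> 2 / lam * (del + (\<Sum>i=1..n. b i)) + 2 * measure M {x \<in> space M. real_of_int (W x) < EW - s2}"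
  proof -
    define X where "X = (del + (\<Sum>i=1..n. b i)) / lam"
    have eq: "2 / lam * (del + (\<Sum>i=1..n. b i)) = 2 * X" unfolding X_def by simp
    have m: "PA - c \<le> X + Pg" using main unfolding X_def .
    have "2 * (PA - c) \<le> 2 * (X + Pg)" using m by simp
    also have "\<dots> \<le> 2 * X + 2 * measure M {x \<in> space M. real_of_int (W x) < EW - s2}"
      using Pgle by simp
    finally show ?thesis unfolding TV eq .
  qed
  show ?thesis unfolding Let_def using final unfolding lam_def del_def s2_def EW_def W_def .
qed

end
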